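(* For any graph $G$ with $N$ edges and any two distinct edges numbered $1,2$, the scheme $$\mathcal{V}(\Psi^{12}_G)\setminus\big(\mathcal{V}(\Psi^{12}_G)\cap\mathcal{V}(\Psi^{1,2}_G)\big)\subset\mathbb{P}^{N-3}=\mathbb{P}(\alpha_3:\dots:\alpha_N)$$ is smooth.
   Context: Dodgson polynomials: for a graph $G$ without self-loops, with edges $1,\dots,N$ and variables $\alpha_e$, orient the edges; for edge $e$ and vertex $v$ let $\varepsilon_{e,v}=1$ if $v$ is the source of $e$, $-1$ if the target, $0$ otherwise; let $\mathcal{E}_G$ be obtained from $(\varepsilon_{e,v})$ by deleting one column, $A=\mathrm{diag}(\alpha_1,\dots,\alpha_N)$, $M_G=\begin{pmatrix}A&\mathcal{E}_G\\-\mathcal{E}_G^T&0\end{pmatrix}$. For edge sets $I,J,K$ with $|I|=|J|$, $\Psi^{I,J}_{G,K}$ is the determinant of $M_G$ with rows $I$ and columns $J$ removed and $\alpha_e=0$ for $e\in K$ (up to sign); $\Psi^{I}_G:=\Psi^{I,I}_G$. Thus $\Psi^{12}_G=\Psi^{\{1,2\},\{1,2\}}_G$ and $\Psi^{1,2}_G=\Psi^{\{1\},\{2\}}_G$. $\mathcal{V}(\cdot)$ denotes the zero locus. *)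

theory Defs
  imports Complex_Main "Jordan_Normal_Form.Determinant" "Jordan_Normal_Form.DL_Submatrix"
begin

definition no_loop_graph :: "nat \<Rightarrow> nat \<Rightarrow> (nat \<Rightarrow> nat) \<Rightarrow> (nat \<Rightarrow> nat) \<Rightarrow> bool" where
  "no_loop_graph n N src tgt \<longleftrightarrow>
     (\<forall>e\<in>{1..N}. src e < n \<and> tgt e < n \<and> src e \<noteq> tgt e)"

definition eps :: "(nat \<Rightarrow> nat) \<Rightarrow> (nat \<Rightarrow> nat) \<Rightarrow> nat \<Rightarrow> nat \<Rightarrow> complex" where
  "eps src tgt e v = (if v = src e then 1 else if v = tgt e then -1 else 0)"

text \<open>The j-th remaining vertex after deleting the column of vertex d.\<close>
definition kept_vertex :: "nat \<Rightarrow> nat \<Rightarrow> nat" where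
  "kept_vertex d j = (if j < d then j else j + 1)"

text \<open>The matrix M_G (column of vertex d deleted from the incidence matrix).
  Index i < N stands for edge i+1; index N+j stands for vertex kept_vertex d j.\<close>
definition graph_matrix ::
  "nat \<Rightarrow> nat \<Rightarrow> (nat \<Rightarrow> nat) \<Rightarrow> (nat \<Rightarrow> nat) \<Rightarrow> nat \<Rightarrow> (nat \<Rightarrow> complex) \<Rightarrow> complex mat" where
  "graph_matrix n N src tgt d \<alpha> =
     mat (N + n - 1) (N + n - 1) (\<lambda>(i, k).
       if i < N \<and> k < N then (if i = k then \<alpha> (i + 1) else 0)
       else if i < N then eps src tgt (i + 1) (kept_vertex d (k - N))
       else if k < N then - eps src tgt (k + 1) (kept_vertex d (i - N))
       else 0)"

text \<open>Dodgson polynomial Psi^{I,J}_{G,K} evaluated at alpha (edge sets I, J, K),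
  as a function of alpha.\<close>
definition dodgson ::
  "nat \<Rightarrow> nat \<Rightarrow> (nat \<Rightarrow> nat) \<Rightarrow> (nat \<Rightarrow> nat) \<Rightarrow> nat \<Rightarrow> nat set \<Rightarrow> nat set \<Rightarrow> nat set
     \<Rightarrow> (nat \<Rightarrow> complex) \<Rightarrow> complex" where
  "dodgson n N src tgt d I J K \<alpha> =
     det (submatrix (graph_matrix n N src tgt d (\<lambda>e. if e \<in> K then 0 else \<alpha> e))
            (- ((\<lambda>e. e - 1) ` I)) (- ((\<lambda>e. e - 1) ` J)))"

definition partial :: "((nat \<Rightarrow> complex) \<Rightarrow> complex) \<Rightarrow> nat \<Rightarrow> (nat \<Rightarrow> complex) \<Rightarrow> complex" where
  "partial f e \<alpha> = (THE D. ((\<lambda>t. f (\<alpha>(e := t))) has_field_derivative D) (at (\<alpha> e)))"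

text \<open>Smoothness of the scheme V(f) \ (V(f) \<inter> V(g)) in P(alpha_3 : ... : alpha_N),
  for homogeneous polynomials f, g in alpha_3..alpha_N (Jacobian criterion over C):
  either f is the zero polynomial (so V(f) is all of projective space, which is smooth),
  or at every point of V(f) outside V(g) some partial derivative of f is nonzero.\<close>
definition smooth_hypersurface_minus :: "nat \<Rightarrow> ((nat \<Rightarrow> complex) \<Rightarrow> complex)
    \<Rightarrow> ((nat \<Rightarrow> complex) \<Rightarrow> complex) \<Rightarrow> bool" where
  "smooth_hypersurface_minus N f g \<longleftrightarrow>
     (\<forall>\<alpha>. f \<alpha> = 0) \<or>
     (\<forall>\<alpha>. (\<exists>e\<in>{3..N}. \<alpha> e \<noteq> 0) \<longrightarrow> f \<alpha> = 0 \<longrightarrow> g \<alpha> \<noteq> 0 \<longrightarrow>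
        (\<exists>e\<in>{3..N}. partial f e \<alpha> \<noteq> 0))"

end

theory Submission
  imports Defs
begin


lemma det_zero_iff_ker:
  fixes F :: "nat \<Rightarrow> nat \<Rightarrow> complex"
  shows "det (mat k k (\<lambda>(i,j). F i j)) = 0 \<longleftrightarrow>
    (\<exists>v. (\<exists>j<k. v j \<noteq> 0) \<and> (\<forall>i<k. (\<Sum>j<k. F i j * v j) = 0))"
proof -
  let ?A = "mat k k (\<lambda>(i,j). F i j)"
  have A: "?A \<in> carrier_mat k k" by simp
  have mv: "(?A *\<^sub>v v) $ i = (\<Sum>j<k. F i j * v $ j)" if "i < k" "v \<in> carrier_vec k" for i v
    using that by (auto simp: scalar_prod_def row_def lessThan_atLeast0 intro!: sum.cong)
  show ?thesis
  proof
    assume "det ?A = 0"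
    then obtain v where v: "v \<in> carrier_vec k" "v \<noteq> 0\<^sub>v k" "?A *\<^sub>v v = 0\<^sub>v k"
      using det_0_iff_vec_prod_zero_field[OF A] by auto
    have "\<exists>j<k. v $ j \<noteq> 0"
    proof (rule ccontr)
      assume "\<not> ?thesis"
      then have "v = 0\<^sub>v k" using v(1) by (intro eq_vecI) auto
      then show False using v(2) by simp
    qed
    moreover have "\<forall>i<k. (\<Sum>j<k. F i j * v $ j) = 0"
    proof (intro allI impI)
      fix i assume i: "i < k"
      have "(?A *\<^sub>v v) $ i = 0" using v(3) i by simp
      then show "(\<Sum>j<k. F i j * v $ j) = 0" using mv[OF i v(1)] by simp
    qed
    ultimately show "\<exists>v. (\<exists>j<k. v j \<noteq> 0) \<and> (\<forall>i<k. (\<Sum>j<k. F i j * v j) = 0)"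
      by (intro exI[of _ "\<lambda>j. v $ j"]) auto
  next
    assume "\<exists>v. (\<exists>j<k. v j \<noteq> 0) \<and> (\<forall>i<k. (\<Sum>j<k. F i j * v j) = 0)"
    then obtain v where v: "\<exists>j<k. v j \<noteq> 0" "\<forall>i<k. (\<Sum>j<k. F i j * v j) = 0" by blast
    let ?v = "vec k v"
    have c: "?v \<in> carrier_vec k" by simp
    have "?v \<noteq> 0\<^sub>v k"
    proof
      assume "?v = 0\<^sub>v k"
      then have "\<forall>j<k. v j = 0" by (metis index_vec index_zero_vec(1))
      then show False using v(1) by blast
    qed
    moreover have "?A *\<^sub>v ?v = 0\<^sub>v k"
      by (rule eq_vecI) (use v(2) mv[OF _ c] in auto)
    ultimately show "det ?A = 0" using det_0_iff_vec_prod_zero_field[OF A] c by blast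
  qed
qed

lemma det_row_affine:
  fixes G :: "nat \<Rightarrow> nat \<Rightarrow> complex"
  assumes r: "r < k"
  shows "det (mat k k (\<lambda>(i,j). if i = r then a j + t * b j else G i j)) =
    det (mat k k (\<lambda>(i,j). if i = r then a j else G i j)) +
    t * det (mat k k (\<lambda>(i,j). if i = r then b j else G i j))"
proof -
  have f: "finite {0..<k}" and rk: "r \<in> {0..<k}" using r by auto
  have P: "(\<Prod>i = 0..<k. if i = r then c (p i) else G i (p i))
      = c (p r) * (\<Prod>i \<in> {0..<k} - {r}. G i (p i))" for c p
    by (subst prod.remove[OF f rk]) (auto intro!: prod.cong)
  show ?thesis
    apply (subst (1 2 3) det_def'[where n = k])
       apply simp_all
    apply (simp add: P sum_distrib_left sum.distrib[symmetric])
    apply (intro sum.cong refl)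
    apply (simp add: P P[of "\<lambda>j. a j + t * b j", simplified] algebra_simps)
    done
qed



lemma core:
  fixes B :: "nat \<Rightarrow> nat \<Rightarrow> complex" and s x z u :: "nat \<Rightarrow> complex"
  assumes sym: "\<And>i j. i<K \<Longrightarrow> j<K \<Longrightarrow> B i j = s i * s j * B j i"
    and ss: "\<And>i. i<K \<Longrightarrow> s i * s i = 1"
    and x: "\<And>i. i<K \<Longrightarrow> (\<Sum>j<K. B i j * x j) = 0"
    and r: "r < K" "x r \<noteq> 0"
    and z: "\<exists>j<K. z j \<noteq> 0" "z r = 0" "\<And>i. i<K \<Longrightarrow> i \<noteq> r \<Longrightarrow> (\<Sum>j<K. B i j * z j) = 0"
  shows "\<exists>w. (\<exists>j<K. w j \<noteq> 0) \<and> (\<forall>i<K. (\<Sum>j<K. B i j * w j) = 0) \<and> (\<Sum>j<K. u j * w j) = 0"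
proof -
  have yB: "(\<Sum>i<K. s i * x i * B i j) = 0" if j: "j < K" for j
  proof -
    have "(\<Sum>i<K. s i * x i * B i j) = (\<Sum>i<K. s j * (B j i * x i))"
    proof (rule sum.cong[OF refl])
      fix i assume "i \<in> {..<K}"
      then have i: "i < K" by simp
      have "s i * x i * B i j = (s i * s i) * s j * B j i * x i"
        using sym[OF i j] by (simp add: algebra_simps)
      then show "s i * x i * B i j = s j * (B j i * x i)" using ss[OF i] by simp
    qed
    also have "\<dots> = s j * (\<Sum>i<K. B j i * x i)" by (simp add: sum_distrib_left)
    finally show ?thesis using x[OF j] by simp
  qed
  have "(\<Sum>i<K. s i * x i * (\<Sum>j<K. B i j * z j)) = (\<Sum>i<K. \<Sum>j<K. s i * x i * B i j * z j)"
    by (simp only: sum_distrib_left mult.assoc)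
  also have "\<dots> = (\<Sum>j<K. \<Sum>i<K. s i * x i * B i j * z j)" by (rule sum.swap)
  also have "\<dots> = (\<Sum>j<K. (\<Sum>i<K. s i * x i * B i j) * z j)" by (simp only: sum_distrib_right)
  also have "\<dots> = 0" using yB by simp
  finally have tot: "(\<Sum>i<K. s i * x i * (\<Sum>j<K. B i j * z j)) = 0" .
  have "(\<Sum>i<K. s i * x i * (\<Sum>j<K. B i j * z j)) = s r * x r * (\<Sum>j<K. B r j * z j)
      + (\<Sum>i\<in>{..<K} - {r}. s i * x i * (\<Sum>j<K. B i j * z j))"
    using r(1) by (subst sum.remove[of _ r]) auto
  also have "(\<Sum>i\<in>{..<K} - {r}. s i * x i * (\<Sum>j<K. B i j * z j)) = 0"
    using z(3) by (intro sum.neutral) auto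
  finally have "s r * x r * (\<Sum>j<K. B r j * z j) = 0" using tot by simp
  moreover have "s r \<noteq> 0" using ss[OF r(1)] by auto
  ultimately have "(\<Sum>j<K. B r j * z j) = 0" using r(2) by simp
  then have Bz: "(\<Sum>j<K. B i j * z j) = 0" if "i<K" for i
    using z(3)[OF that] by (cases "i = r") auto
  define a where "a = (\<Sum>j<K. u j * z j)"
  define b where "b = (\<Sum>j<K. u j * x j)"
  define w where "w = (\<lambda>j. a * x j - b * z j)"
  have Bw: "(\<Sum>j<K. B i j * w j) = 0" if "i<K" for i
  proof -
    have "(\<Sum>j<K. B i j * w j) = (\<Sum>j<K. a * (B i j * x j) - b * (B i j * z j))"
      unfolding w_def by (intro sum.cong refl) (simp add: algebra_simps)
    also have "\<dots> = (\<Sum>j<K. a * (B i j * x j)) - (\<Sum>j<K. b * (B i j * z j))"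
      by (rule sum_subtractf)
    also have "\<dots> = a * (\<Sum>j<K. B i j * x j) - b * (\<Sum>j<K. B i j * z j)"
      by (simp only: sum_distrib_left)
    finally have "(\<Sum>j<K. B i j * w j) = a * (\<Sum>j<K. B i j * x j) - b * (\<Sum>j<K. B i j * z j)" .
    then show ?thesis using x[OF that] Bz[OF that] by simp
  qed
  have uw: "(\<Sum>j<K. u j * w j) = 0"
  proof -
    have "(\<Sum>j<K. u j * w j) = a * (\<Sum>j<K. u j * x j) - b * (\<Sum>j<K. u j * z j)"
    proof -
      have "(\<Sum>j<K. u j * w j) = (\<Sum>j<K. a * (u j * x j) - b * (u j * z j))"
        unfolding w_def by (intro sum.cong refl) (simp add: algebra_simps)
      also have "\<dots> = (\<Sum>j<K. a * (u j * x j)) - (\<Sum>j<K. b * (u j * z j))"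
        by (rule sum_subtractf)
      also have "\<dots> = a * (\<Sum>j<K. u j * x j) - b * (\<Sum>j<K. u j * z j)"
        by (simp only: sum_distrib_left)
      finally show ?thesis .
    qed
    also have "\<dots> = a * b - b * a" unfolding a_def b_def ..
    finally show ?thesis by simp
  qed
  show ?thesis
  proof (cases "\<exists>j<K. w j \<noteq> 0")
    case True
    then show ?thesis using Bw uw by blast
  next
    case False
    then have "w r = 0" using r(1) by blast
    then have a0: "a = 0" using r(2) z(2) unfolding w_def by simp
    obtain j where j: "j<K" "z j \<noteq> 0" using z(1) by blast
    have "w j = 0" using False j(1) by blast
    then have "b = 0" using a0 j(2) unfolding w_def by simp
    then show ?thesis using x r unfolding b_def by (intro exI[of _ x]) auto
  qed
qed



definition GMf :: "nat \<Rightarrow> (nat \<Rightarrow> nat) \<Rightarrow> (nat \<Rightarrow> nat) \<Rightarrow> nat \<Rightarrow> (nat \<Rightarrow> complex) \<Rightarrow> nat \<Rightarrow> nat \<Rightarrow> complex" where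
  "GMf N src tgt d \<alpha> i k =
       (if i < N \<and> k < N then (if i = k then \<alpha> (i + 1) else 0)
       else if i < N then eps src tgt (i + 1) (kept_vertex d (k - N))
       else if k < N then - eps src tgt (k + 1) (kept_vertex d (i - N))
       else 0)"

lemma gm_eq: "graph_matrix n N src tgt d \<alpha> = mat (N + n - 1) (N + n - 1) (\<lambda>(i,k). GMf N src tgt d \<alpha> i k)"
  unfolding graph_matrix_def GMf_def by simp

lemma pick01: "pick (-{0,1}) i = i + 2"
proof (induction i)
  case 0
  show ?case unfolding pick.simps by (rule Least_equality) auto
next
  case (Suc i)
  show ?case unfolding pick.simps Suc.IH by (rule Least_equality) auto
qed

lemma pick0: "pick (-{0}) i = i + 1"
proof (induction i)
  case 0
  show ?case unfolding pick.simps by (rule Least_equality) auto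
next
  case (Suc i)
  show ?case unfolding pick.simps Suc.IH by (rule Least_equality) auto
qed

lemma pick1: "pick (-{1}) i = (if i = 0 then 0 else i + 1)"
proof (induction i)
  case 0
  have "(LEAST a::nat. a \<in> -{1}) = 0" by (rule Least_equality) auto
  then show ?case unfolding pick.simps by simp
next
  case (Suc i)
  have "(LEAST a. a \<in> -{1} \<and> a > pick (-{1}) i) = Suc i + 1"
    unfolding Suc.IH by (rule Least_equality) (auto split: if_splits)
  then show ?case unfolding pick.simps by simp
qed

lemma card01: "card {i. i < m \<and> i \<in> -{0,1::nat}} = m - 2"
proof -
  have "{i. i < m \<and> i \<in> -{0,1::nat}} = {2..<m}" by auto
  then show ?thesis by simp
qed

lemma card0: "card {i. i < m \<and> i \<in> -{0::nat}} = m - 1"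
proof -
  have "{i. i < m \<and> i \<in> -{0::nat}} = {1..<m}" by auto
  then show ?thesis by simp
qed

lemma card1: assumes "m \<ge> 2" shows "card {i. i < m \<and> i \<in> -{1::nat}} = m - 1"
proof -
  have "{i. i < m \<and> i \<in> -{1::nat}} = insert 0 {2..<m}" using assms by auto
  then show ?thesis using assms by simp
qed

lemma f_eq:
  assumes "N + n - 1 \<ge> 2"
  shows "dodgson n N src tgt d {1,2} {1,2} {} \<alpha> =
    det (mat (N + n - 3) (N + n - 3) (\<lambda>(i,j). GMf N src tgt d \<alpha> (i+2) (j+2)))"
proof -
  have im: "(\<lambda>e. e - 1) ` {1,2::nat} = {0,1}" by auto
  have al: "(\<lambda>e. if e \<in> {} then 0 else \<alpha> e) = \<alpha>" by simp
  show ?thesis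
    unfolding dodgson_def im al gm_eq
  proof (rule arg_cong[of _ _ det], rule eq_matI)
    let ?S = "submatrix (mat (N + n - 1) (N + n - 1) (\<lambda>(i,k). GMf N src tgt d \<alpha> i k)) (-{0,1}) (-{0,1})"
    have "dim_row ?S = card {i. i < N + n - 1 \<and> i \<in> -{0,1}}" by (simp only: dim_submatrix dim_row_mat)
    also have "\<dots> = N + n - 3" by (simp only: card01)
    finally have dr1: "dim_row ?S = N + n - 3" .
    have "dim_col ?S = card {i. i < N + n - 1 \<and> i \<in> -{0,1}}" by (simp only: dim_submatrix dim_col_mat)
    also have "\<dots> = N + n - 3" by (simp only: card01)
    finally have dr: "dim_row ?S = N + n - 3" "dim_col ?S = N + n - 3" using dr1 by auto
    then show "dim_row ?S = dim_row (mat (N + n - 3) (N + n - 3) (\<lambda>(i,j). GMf N src tgt d \<alpha> (i+2) (j+2)))"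
      "dim_col ?S = dim_col (mat (N + n - 3) (N + n - 3) (\<lambda>(i,j). GMf N src tgt d \<alpha> (i+2) (j+2)))" by simp_all
    fix i j assume ij: "i < dim_row (mat (N + n - 3) (N + n - 3) (\<lambda>(i,j). GMf N src tgt d \<alpha> (i+2) (j+2)))"
      "j < dim_col (mat (N + n - 3) (N + n - 3) (\<lambda>(i,j). GMf N src tgt d \<alpha> (i+2) (j+2)))"
    then have i: "i < N + n - 3" and j: "j < N + n - 3" by simp_all
    let ?M = "mat (N + n - 1) (N + n - 1) (\<lambda>(i,k). GMf N src tgt d \<alpha> i k)"
    have ci: "i < card {i. i < dim_row ?M \<and> i \<in> -{0,1}}"
      by (subst dim_row_mat, subst card01) (use i in simp)
    have cj: "j < card {i. i < dim_col ?M \<and> i \<in> -{0,1}}"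
      by (subst dim_col_mat, subst card01) (use j in simp)
    show "?S $$ (i, j) = mat (N + n - 3) (N + n - 3) (\<lambda>(i,j). GMf N src tgt d \<alpha> (i+2) (j+2)) $$ (i, j)"
      unfolding submatrix_index[OF ci cj] pick01 using i j by simp
  qed
qed

lemma g_eq:
  assumes "N + n - 1 \<ge> 2"
  shows "dodgson n N src tgt d {1} {2} {} \<alpha> =
    det (mat (N + n - 2) (N + n - 2) (\<lambda>(i,j). GMf N src tgt d \<alpha> (i+1) (if j = 0 then 0 else j+1)))"
proof -
  have im: "(\<lambda>e. e - 1) ` {1::nat} = {0}" "(\<lambda>e. e - 1) ` {2::nat} = {1}" by auto
  have al: "(\<lambda>e. if e \<in> {} then 0 else \<alpha> e) = \<alpha>" by simp
  show ?thesis
    unfolding dodgson_def im al gm_eq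
  proof (rule arg_cong[of _ _ det], rule eq_matI)
    let ?S = "submatrix (mat (N + n - 1) (N + n - 1) (\<lambda>(i,k). GMf N src tgt d \<alpha> i k)) (-{0}) (-{1})"
    let ?T = "mat (N + n - 2) (N + n - 2) (\<lambda>(i,j). GMf N src tgt d \<alpha> (i+1) (if j = 0 then 0 else j+1))"
    have "dim_row ?S = card {i. i < N + n - 1 \<and> i \<in> -{0}}" by (simp only: dim_submatrix dim_row_mat)
    also have "\<dots> = N + n - 2" by (simp only: card0)
    finally have dr1: "dim_row ?S = N + n - 2" .
    have "dim_col ?S = card {i. i < N + n - 1 \<and> i \<in> -{1}}" by (simp only: dim_submatrix dim_col_mat)
    also have "\<dots> = N + n - 2" by (simp only: card1[OF assms])
    finally have dr: "dim_row ?S = N + n - 2" "dim_col ?S = N + n - 2" using dr1 by auto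
    then show "dim_row ?S = dim_row ?T" "dim_col ?S = dim_col ?T" by simp_all
    fix i j assume ij: "i < dim_row ?T" "j < dim_col ?T"
    then have i: "i < N + n - 2" and j: "j < N + n - 2" by simp_all
    let ?M = "mat (N + n - 1) (N + n - 1) (\<lambda>(i,k). GMf N src tgt d \<alpha> i k)"
    have ci: "i < card {i. i < dim_row ?M \<and> i \<in> -{0}}"
      by (subst dim_row_mat, subst card0) (use i in simp)
    have cj: "j < card {i. i < dim_col ?M \<and> i \<in> -{1}}"
      by (subst dim_col_mat, subst card1[OF assms]) (use j in simp)
    show "?S $$ (i, j) = ?T $$ (i, j)"
      unfolding submatrix_index[OF ci cj] pick0 pick1 using i j by simp
  qed
qed



lemma gm_sym: "GMf N src tgt d \<alpha> i k =
   (if i < N then 1 else -1) * (if k < N then 1 else -1) * GMf N src tgt d \<alpha> k i"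
  by (simp add: GMf_def)

lemma gm_col: "N \<le> k \<Longrightarrow> GMf N src tgt d \<alpha> i k = GMf N src tgt d \<beta> i k"
  by (simp add: GMf_def)

lemma gm_upd: "1 \<le> e \<Longrightarrow> e - 1 < N \<Longrightarrow>
   GMf N src tgt d (\<alpha>(e:=t)) i k = (if i = e - 1 \<and> k = e - 1 then t else GMf N src tgt d \<alpha> i k)"
  by (auto simp: GMf_def)

lemma partial_eq:
  assumes m2: "N + n - 1 \<ge> 2" and e: "e \<in> {3..N}" and n1: "n \<ge> 1"
  shows "partial (dodgson n N src tgt d {1,2} {1,2} {}) e \<alpha> =
    det (mat (N + n - 3) (N + n - 3) (\<lambda>(i,j). if i = e - 3 then (if j = e - 3 then 1 else 0)
          else GMf N src tgt d \<alpha> (i+2) (j+2)))"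
proof -
  define K where "K = N + n - 3"
  define r where "r = e - 3"
  have rK: "r < K" using e m2 n1 unfolding r_def K_def by auto
  define a where "a = (\<lambda>j. if j = r then 0 else GMf N src tgt d \<alpha> (r+2) (j+2))"
  define b :: "nat \<Rightarrow> complex" where "b = (\<lambda>j. if j = r then 1 else 0)"
  define c0 where "c0 = det (mat K K (\<lambda>(i,j). if i = r then a j else GMf N src tgt d \<alpha> (i+2) (j+2)))"
  define c1 where "c1 = det (mat K K (\<lambda>(i,j). if i = r then b j else GMf N src tgt d \<alpha> (i+2) (j+2)))"
  have ft: "dodgson n N src tgt d {1,2} {1,2} {} (\<alpha>(e:=t)) = c0 + t * c1" for t
  proof -
    have "mat K K (\<lambda>(i,j). GMf N src tgt d (\<alpha>(e:=t)) (i+2) (j+2)) =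
          mat K K (\<lambda>(i,j). if i = r then a j + t * b j else GMf N src tgt d \<alpha> (i+2) (j+2))"
    proof (rule eq_matI)
      fix i j assume "i < dim_row (mat K K (\<lambda>(i,j). if i = r then a j + t * b j else GMf N src tgt d \<alpha> (i+2) (j+2)))"
        "j < dim_col (mat K K (\<lambda>(i,j). if i = r then a j + t * b j else GMf N src tgt d \<alpha> (i+2) (j+2)))"
      then have ij: "i < K" "j < K" by auto
      have ee: "1 \<le> e" "e - 1 < N" using e by auto
      show "mat K K (\<lambda>(i,j). GMf N src tgt d (\<alpha>(e:=t)) (i+2) (j+2)) $$ (i, j) =
          mat K K (\<lambda>(i,j). if i = r then a j + t * b j else GMf N src tgt d \<alpha> (i+2) (j+2)) $$ (i, j)"
        using ij e unfolding gm_upd[OF ee] a_def b_def r_def by auto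
    qed auto
    then show ?thesis
      unfolding f_eq[OF m2] K_def[symmetric] c0_def c1_def
      by (simp add: det_row_affine[OF rK])
  qed
  have der: "((\<lambda>t. c0 + t * c1) has_field_derivative c1) (at x)" for x
    by (auto intro!: derivative_eq_intros)
  have "partial (dodgson n N src tgt d {1,2} {1,2} {}) e \<alpha> = c1"
    unfolding partial_def ft
  proof (rule the_equality)
    show "((\<lambda>t. c0 + t * c1) has_field_derivative c1) (at (\<alpha> e))" by (rule der)
    fix D assume "((\<lambda>t. c0 + t * c1) has_field_derivative D) (at (\<alpha> e))"
    then show "D = c1" using der DERIV_unique by blast
  qed
  then show ?thesis unfolding c1_def b_def K_def r_def .
qed



theorem corollary4p3:
  fixes n N d :: nat and src tgt :: "nat \<Rightarrow> nat"
  assumes "no_loop_graph n N src tgt"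
    and "N \<ge> 2"
    and "d < n"
  shows "smooth_hypersurface_minus N
           (dodgson n N src tgt d {1, 2} {1, 2} {})
           (dodgson n N src tgt d {1} {2} {})"
proof -
  have N2: "N \<ge> 2" and n1: "n \<ge> 1" using assms by auto
  have m2: "N + n - 1 \<ge> 2" using N2 n1 by simp
  define K where "K = N + n - 3"
  define f where "f = dodgson n N src tgt d {1, 2} {1, 2} {}"
  define g where "g = dodgson n N src tgt d {1} {2} {}"
  define Bf where "Bf = (\<lambda>\<alpha> i j. GMf N src tgt d \<alpha> (i+2) (j+2))"
  have fB: "f \<alpha> = det (mat K K (\<lambda>(i,j). Bf \<alpha> i j))" for \<alpha>
    unfolding f_def f_eq[OF m2] K_def Bf_def ..
  have main: "(\<forall>\<alpha>. f \<alpha> = 0) \<or>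
     (\<forall>\<alpha>. (\<exists>e\<in>{3..N}. \<alpha> e \<noteq> 0) \<longrightarrow> f \<alpha> = 0 \<longrightarrow> g \<alpha> \<noteq> 0 \<longrightarrow>
        (\<exists>e\<in>{3..N}. partial f e \<alpha> \<noteq> 0))"
  proof (cases "\<forall>\<alpha>. f \<alpha> = 0")
    case True
    then show ?thesis by blast
  next
    case False
    then obtain \<beta> where f\<beta>: "f \<beta> \<noteq> 0" by blast
    have "\<forall>\<alpha>. (\<exists>e\<in>{3..N}. \<alpha> e \<noteq> 0) \<longrightarrow> f \<alpha> = 0 \<longrightarrow> g \<alpha> \<noteq> 0 \<longrightarrow>
        (\<exists>e\<in>{3..N}. partial f e \<alpha> \<noteq> 0)"
    proof (intro allI impI)
      fix \<alpha> assume f0: "f \<alpha> = 0" and gn: "g \<alpha> \<noteq> 0"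
      show "\<exists>e\<in>{3..N}. partial f e \<alpha> \<noteq> 0"
      proof (rule ccontr)
        assume "\<not> ?thesis"
        then have P0: "\<And>e. e \<in> {3..N} \<Longrightarrow> partial f e \<alpha> = 0" by blast
        obtain x where x: "\<exists>j<K. x j \<noteq> 0" "\<forall>i<K. (\<Sum>j<K. Bf \<alpha> i j * x j) = 0"
          using f0 unfolding fB det_zero_iff_ker by blast
        obtain r where r: "r < N - 2" "x r \<noteq> 0"
        proof (rule ccontr)
          assume "\<not> thesis"
          then have xz: "\<And>r. r < N - 2 \<Longrightarrow> x r = 0" using that by blast
          have "\<forall>i<K. (\<Sum>j<K. Bf \<beta> i j * x j) = 0"
          proof (intro allI impI)
            fix i assume i: "i < K"
            have "(\<Sum>j<K. Bf \<beta> i j * x j) = (\<Sum>j<K. Bf \<alpha> i j * x j)"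
            proof (rule sum.cong[OF refl])
              fix j assume "j \<in> {..<K}"
              show "Bf \<beta> i j * x j = Bf \<alpha> i j * x j"
              proof (cases "j < N - 2")
                case True then show ?thesis using xz by simp
              next
                case False
                then have "N \<le> j + 2" by simp
                then show ?thesis unfolding Bf_def using gm_col by metis
              qed
            qed
            then show "(\<Sum>j<K. Bf \<beta> i j * x j) = 0" using x(2) i by simp
          qed
          then have "f \<beta> = 0" unfolding fB det_zero_iff_ker using x(1) by blast
          then show False using f\<beta> by simp
        qed
        define e where "e = r + 3"
        have e: "e \<in> {3..N}" using r N2 unfolding e_def by auto
        have rK: "r < K" using r n1 unfolding K_def by simp
        have re: "e - 3 = r" unfolding e_def by simp
        have "det (mat K K (\<lambda>(i,j). if i = r then (if j = r then 1 else 0) else Bf \<alpha> i j)) = 0"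
          using P0[OF e] unfolding f_def partial_eq[OF m2 e n1] re K_def Bf_def .
        then obtain z where z: "\<exists>j<K. z j \<noteq> 0"
          "\<forall>i<K. (\<Sum>j<K. (if i = r then (if j = r then 1 else 0) else Bf \<alpha> i j) * z j) = 0"
          unfolding det_zero_iff_ker by blast
        have "(\<Sum>j<K. (if r = r then (if j = r then 1 else 0) else Bf \<alpha> r j) * z j) = 0"
          using z(2) rK by blast
        then have "(\<Sum>j<K. (if j = r then z j else 0)) = 0"
          by (simp add: if_distrib[of "\<lambda>c. c * z _"] cong: if_cong)
        then have zr: "z r = 0" using rK by (simp add: sum.delta)
        have zo: "(\<Sum>j<K. Bf \<alpha> i j * z j) = 0" if "i < K" "i \<noteq> r" for i
          using z(2) that by auto
        define s :: "nat \<Rightarrow> complex" where "s = (\<lambda>i. if i < N - 2 then 1 else -1)"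
        have sym: "Bf \<alpha> i j = s i * s j * Bf \<alpha> j i" for i j
          unfolding Bf_def s_def using N2 by (subst gm_sym) (auto split: if_splits)
        have ss: "s i * s i = 1" for i unfolding s_def by simp
        obtain w where w: "\<exists>j<K. w j \<noteq> 0" "\<forall>i<K. (\<Sum>j<K. Bf \<alpha> i j * w j) = 0"
          "(\<Sum>j<K. GMf N src tgt d \<alpha> 1 (j+2) * w j) = 0"
          using core[of K "Bf \<alpha>" s x r z "\<lambda>j. GMf N src tgt d \<alpha> 1 (j+2)", OF sym ss _ rK r(2) z(1) zr zo]
            x(2) by blast
        define w' where "w' = (\<lambda>j. if j = 0 then 0 else w (j - 1))"
        have sz: "N + n - 2 = Suc K" using m2 unfolding K_def by simp
        have "g \<alpha> = 0"
          unfolding g_def g_eq[OF m2] sz det_zero_iff_ker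
        proof (intro exI[of _ w'] conjI allI impI)
          obtain j where "j < K" "w j \<noteq> 0" using w(1) by blast
          then show "\<exists>j<Suc K. w' j \<noteq> 0" unfolding w'_def by (intro exI[of _ "Suc j"]) auto
          fix i assume i: "i < Suc K"
          have "(\<Sum>j<Suc K. GMf N src tgt d \<alpha> (i + 1) (if j = 0 then 0 else j + 1) * w' j)
              = (\<Sum>j<K. GMf N src tgt d \<alpha> (i + 1) (j + 2) * w j)"
            unfolding sum.lessThan_Suc_shift w'_def by simp
          also have "\<dots> = 0"
          proof (cases i)
            case 0 then show ?thesis using w(3) by simp
          next
            case (Suc i')
            then have "i' < K" using i by simp
            then show ?thesis using w(2) Suc unfolding Bf_def by simp
          qed
          finally show "(\<Sum>j<Suc K. GMf N src tgt d \<alpha> (i + 1) (if j = 0 then 0 else j + 1) * w' j) = 0" .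
        qed
        then show False using gn by simp
      qed
    qed
    then show ?thesis by blast
  qed
  then show ?thesis unfolding smooth_hypersurface_minus_def f_def g_def .
qed

end
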